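(* Let $n\ge 1$ and let $\vec v=(v_1,\dots,v_n)\in\mathbb N_b^n$. For $1\le j\le n$ let $q_j=\#\{i:\ v_i=j\}$. Then there is exactly one complete expression in the letters $x_1,\dots,x_{n+1}$ in which, for every $j$, exactly $q_j$ left parentheses stand immediately to the left of $x_j$ (and no left parenthesis stands immediately to the left of $x_{n+1}$). Sending $\vec v$ to the tree of $Y_n$ corresponding to this complete expression defines a map $\mathrm{Tree}:\mathbb N_b^n\to Y_n$, and this map is surjective.
   Context: $\mathbb N_b^n=\{(v_1,\dots,v_n)\in\mathbb N^n:\ 1\le v_i\le i \text{ for all } i\}$. For $n\ge0$, $Y_n$ denotes the set of planar rooted binary trees with $n$ internal (trivalent) vertices, hence $n+1$ leaves, up to isotopy; $Y_0$ consists of the single trivial tree $|$. For $\tau_1\in Y_p,\tau_2\in Y_q$ the grafting $\tau_1\vee\tau_2\in Y_{p+q+1}$ is the tree with a new root vertex whose left subtree is $\tau_1$ and whose right subtree is $\tau_2$. A complete expression in the letters $x_1,\dots,x_{n+1}$ is a full binary parenthesization of the word $x_1x_2\cdots x_{n+1}$ in which every product of two factors, including the outermost one, is enclosed in a pair of parentheses (so there are $n$ pairs). Trees of $Y_n$ correspond bijectively to complete expressions: $|\mapsto x_1$, and $\tau_1\vee\tau_2\mapsto(E_1E_2)$ where $E_1,E_2$ are the complete expressions of $\tau_1,\tau_2$, with letters relabelled consecutively from left to right. *)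

theory Defs
  imports Main
begin

datatype ptree = Leaf | Node ptree ptree

fun internal :: "ptree \<Rightarrow> nat" where
  "internal Leaf = 0"
| "internal (Node l r) = Suc (internal l + internal r)"

fun leaves :: "ptree \<Rightarrow> nat" where
  "leaves Leaf = 1"
| "leaves (Node l r) = leaves l + leaves r"

definition Y :: "nat \<Rightarrow> ptree set" where
  "Y n = {t. internal t = n}"

datatype tok = LP | RP | X nat

fun expr :: "nat \<Rightarrow> ptree \<Rightarrow> tok list" where
  "expr k Leaf = [X k]"
| "expr k (Node l r) = [LP] @ expr k l @ expr (k + leaves l) r @ [RP]"

definition CE :: "nat \<Rightarrow> tok list set" where
  "CE n = expr 1 ` Y n"

text \<open>Number of left parentheses standing immediately to the left of x_j in w.\<close>
definition lp_before :: "tok list \<Rightarrow> nat \<Rightarrow> nat" where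
  "lp_before w j = length (takeWhile (\<lambda>c. c = LP) (rev (takeWhile (\<lambda>c. c \<noteq> X j) w)))"

text \<open>N_b^n as lists v of length n with 1 <= v!i <= i+1 (0-based positions).\<close>
definition Nb :: "nat \<Rightarrow> nat list set" where
  "Nb n = {v. length v = n \<and> (\<forall>i<n. 1 \<le> v ! i \<and> v ! i \<le> i + 1)}"

definition q :: "nat list \<Rightarrow> nat \<Rightarrow> nat" where
  "q v j = card {i. i < length v \<and> v ! i = j}"

definition has_counts :: "nat list \<Rightarrow> tok list \<Rightarrow> bool" where
  "has_counts v w \<longleftrightarrow> (\<forall>j\<in>{1..length v}. lp_before w j = q v j)
                        \<and> lp_before w (length v + 1) = 0"

definition Tree :: "nat list \<Rightarrow> ptree" where
  "Tree v = (THE t. t \<in> Y (length v) \<and>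
     expr 1 t = (THE w. w \<in> CE (length v) \<and> has_counts v w))"

end

theory Submission imports Defs begin

fun lcp :: "nat \<Rightarrow> ptree \<Rightarrow> nat list" where
  "lcp a Leaf = [a]"
| "lcp a (Node l r) = lcp (Suc a) l @ lcp 0 r"

lemma leaves_internal: "leaves t = Suc (internal t)"
  by (induction t) auto

lemma length_lcp[simp]: "length (lcp a t) = leaves t"
  by (induction t arbitrary: a) auto

lemma lcp_ne[simp]: "lcp a t \<noteq> []"
  by (induction t arbitrary: a) auto

lemma lcp_shift: "lcp a t = (hd (lcp 0 t) + a) # tl (lcp 0 t)"
proof (induction t arbitrary: a)
  case Leaf then show ?case by simp
next
  case (Node l r)
  have "lcp (Suc a) l = (hd (lcp 0 l) + Suc a) # tl (lcp 0 l)" by (rule Node.IH(1))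
  moreover have "lcp (Suc 0) l = (hd (lcp 0 l) + Suc 0) # tl (lcp 0 l)" by (rule Node.IH(1))
  ultimately show ?case by simp
qed

lemma lcp_nth: "i < leaves t \<Longrightarrow> lcp a t ! i = lcp 0 t ! i + (if i = 0 then a else 0)"
proof -
  obtain y ys where y: "lcp 0 t = y # ys" by (metis lcp_ne list.exhaust)
  have "lcp a t = (y + a) # ys" by (subst lcp_shift) (simp add: y)
  then show ?thesis using y by (cases i) auto
qed

lemma sum_take_lcp: "k \<ge> 1 \<Longrightarrow> sum_list (take k (lcp a t)) = a + sum_list (take k (lcp 0 t))"
proof -
  obtain y ys where y: "lcp 0 t = y # ys" by (metis lcp_ne list.exhaust)
  assume "k \<ge> 1"
  then obtain k' where "k = Suc k'" by (cases k) auto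
  have "lcp a t = (y + a) # ys" by (subst lcp_shift) (simp add: y)
  then show ?thesis using y \<open>k = Suc k'\<close> by simp
qed

lemma last_lcp: "last (lcp a t) = (if t = Leaf then a else 0)"
  by (induction t arbitrary: a) auto

lemma hd_lcp: "hd (lcp a t) \<ge> a \<and> (t \<noteq> Leaf \<longrightarrow> hd (lcp a t) > a)"
proof (induction t arbitrary: a)
  case Leaf then show ?case by simp
next
  case (Node l r)
  have "hd (lcp a (Node l r)) = hd (lcp (Suc a) l)" by simp
  then show ?case using Node.IH(1)[of "Suc a"] by simp
qed

lemma lcp_prefix: "lcp a t1 @ s1 = lcp a t2 @ s2 \<Longrightarrow> t1 = t2 \<and> s1 = s2"
proof (induction t1 arbitrary: a t2 s1 s2)
  case Leaf
  then show ?case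
  proof (cases t2)
    case (Node l r)
    have "hd (lcp a t2 @ s2) = hd (lcp a t2)" by simp
    then have "hd (lcp a t2 @ s2) > a" using hd_lcp[of a t2] Node by simp
    moreover have "hd (lcp a Leaf @ s1) = a" by simp
    ultimately show ?thesis using Leaf.prems by (metis less_irrefl)
  qed simp
next
  case (Node l1 r1)
  then show ?case
  proof (cases t2)
    case Leaf
    have "hd (lcp a (Node l1 r1) @ s1) = hd (lcp a (Node l1 r1))" by simp
    then have "hd (lcp a (Node l1 r1) @ s1) > a" using hd_lcp[of a "Node l1 r1"] by simp
    moreover have "hd (lcp a Leaf @ s2) = a" by simp
    ultimately show ?thesis using Node.prems Leaf by (metis less_irrefl)
  next
    case (Node l2 r2)
    with Node.prems have "lcp (Suc a) l1 @ (lcp 0 r1 @ s1) = lcp (Suc a) l2 @ (lcp 0 r2 @ s2)" by simp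
    then have "l1 = l2" and "lcp 0 r1 @ s1 = lcp 0 r2 @ s2" using Node.IH(1) by blast+
    then show ?thesis using Node.IH(2) Node by blast
  qed
qed

lemma lcp_inj: "lcp 0 t1 = lcp 0 t2 \<Longrightarrow> t1 = t2"
  using lcp_prefix[of 0 t1 "[]" t2 "[]"] by simp

definition P :: "nat \<Rightarrow> nat list \<Rightarrow> bool" where
  "P m c \<longleftrightarrow> length c = Suc m \<and> sum_list c = m \<and> (\<forall>k. 1 \<le> k \<and> k \<le> m \<longrightarrow> sum_list (take k c) \<ge> k)"

lemma sum_lcp: "sum_list (lcp a t) = a + internal t"
  by (induction t arbitrary: a) auto

lemma P_lcp: "P (internal t) (lcp 0 t)"
proof (induction t)
  case Leaf then show ?case by (simp add: P_def)
next
  case (Node l r)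
  have L: "\<forall>k. 1 \<le> k \<and> k \<le> internal l \<longrightarrow> sum_list (take k (lcp 0 l)) \<ge> k"
    using Node.IH(1) by (simp add: P_def)
  have R: "\<forall>k. 1 \<le> k \<and> k \<le> internal r \<longrightarrow> sum_list (take k (lcp 0 r)) \<ge> k"
    using Node.IH(2) by (simp add: P_def)
  have "sum_list (take k (lcp 1 l @ lcp 0 r)) \<ge> k" if k: "1 \<le> k" "k \<le> Suc (internal l + internal r)" for k
  proof (cases "k \<le> Suc (internal l)")
    case True
    then have "take k (lcp 1 l @ lcp 0 r) = take k (lcp 1 l)" by (simp add: leaves_internal)
    moreover have "sum_list (take k (lcp 1 l)) = 1 + sum_list (take k (lcp 0 l))"
      using sum_take_lcp k by blast
    moreover have "sum_list (take k (lcp 0 l)) \<ge> k - 1"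
    proof (cases "k \<le> internal l")
      case True then show ?thesis using L k by fastforce
    next
      case False
      then have "k = Suc (internal l)" using \<open>k \<le> Suc (internal l)\<close> by simp
      then show ?thesis by (simp add: leaves_internal sum_lcp)
    qed
    ultimately show ?thesis by simp
  next
    case False
    define k' where "k' = k - Suc (internal l)"
    have kk: "k = Suc (internal l) + k'" "1 \<le> k'" "k' \<le> internal r" using False k k'_def by auto
    have "take k (lcp 1 l @ lcp 0 r) = lcp 1 l @ take k' (lcp 0 r)"
      using kk by (simp add: leaves_internal)
    then have "sum_list (take k (lcp 1 l @ lcp 0 r)) = Suc (internal l) + sum_list (take k' (lcp 0 r))"
      by (simp add: sum_lcp)
    then show ?thesis using R kk by fastforce
  qed
  then show ?case by (simp add: P_def leaves_internal sum_lcp)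
qed

lemma P_exists: "P m c \<Longrightarrow> \<exists>t. lcp 0 t = c"
proof (induction m arbitrary: c rule: less_induct)
  case (less m)
  show ?case
  proof (cases m)
    case 0
    with less.prems have "c = [0]" unfolding P_def
      by (cases c) auto
    then show ?thesis by (intro exI[of _ Leaf]) simp
  next
    case (Suc m0)
    from less.prems obtain x xs where c: "c = x # xs" unfolding P_def by (cases c) auto
    have lenxs: "length xs = m" and sumc: "x + sum_list xs = m"
      and pre: "\<And>k. 1 \<le> k \<Longrightarrow> k \<le> m \<Longrightarrow> sum_list (take k c) \<ge> k"
      using less.prems c by (auto simp: P_def)
    have x1: "x \<ge> 1" using pre[of 1] Suc c by simp
    have sd: "sum_list (take k xs) + sum_list (drop k xs) = sum_list xs" for k
      by (metis append_take_drop_id sum_list_append)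
    have tk: "sum_list (take k c) = x + sum_list (take (k - 1) xs)" if "k \<ge> 1" for k
      using that c by (cases k) auto
    have ex: "1 \<le> m \<and> sum_list (take m c) = m"
    proof -
      have "sum_list (take m c) \<ge> m" using pre[of m] Suc by simp
      moreover have "sum_list (take m c) \<le> m" using tk[of m] Suc sumc sd[of "m-1"] by simp
      ultimately show ?thesis using Suc by simp
    qed
    define a where "a = (LEAST k. 1 \<le> k \<and> sum_list (take k c) = k)"
    have a1: "1 \<le> a \<and> sum_list (take a c) = a" unfolding a_def by (rule LeastI[of _ m]) (rule ex)
    have am: "a \<le> m" unfolding a_def by (rule Least_le) (rule ex)
    have alt: "\<And>k. 1 \<le> k \<Longrightarrow> k < a \<Longrightarrow> sum_list (take k c) \<noteq> k"
      unfolding a_def using not_less_Least by blast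
    have xa: "x + sum_list (take (a - 1) xs) = a" using a1 tk[of a] by simp
    define L where "L = (x - 1) # take (a - 1) xs"
    define R where "R = drop (a - 1) xs"
    have PL: "P (a - 1) L"
      unfolding P_def
    proof (intro conjI allI impI)
      show "length L = Suc (a - 1)" using L_def am lenxs a1 by simp
      show "sum_list L = a - 1" using L_def xa x1 by simp
      fix k assume k: "1 \<le> k \<and> k \<le> a - 1"
      have "k \<le> m" using k am by linarith
      then have "sum_list (take k c) \<ge> k" using pre[of k] k by simp
      moreover have "k < a" using k a1 by linarith
      then have "sum_list (take k c) \<noteq> k" using alt[of k] k by simp
      ultimately have "sum_list (take k c) \<ge> Suc k" by simp
      moreover have "take k L = (x - 1) # take (k - 1) xs" using L_def k by (cases k) (auto simp: min_def)
      ultimately show "sum_list (take k L) \<ge> k" using tk[of k] k x1 by simp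
    qed
    have PR: "P (m - a) R"
      unfolding P_def
    proof (intro conjI allI impI)
      show "length R = Suc (m - a)" using R_def am lenxs a1 by simp
      show "sum_list R = m - a" using R_def sd[of "a - 1"] xa sumc by simp
      fix k assume k: "1 \<le> k \<and> k \<le> m - a"
      have "a + k \<le> m" using k am by linarith
      then have "sum_list (take (a + k) c) \<ge> a + k" using pre[of "a+k"] k by simp
      moreover have "take (a - 1 + k) xs = take (a - 1) xs @ take k R" unfolding R_def by (rule take_add)
      moreover have "sum_list (take (a + k) c) = x + sum_list (take (a - 1 + k) xs)"
        using tk[of "a+k"] a1 by simp
      ultimately show "sum_list (take k R) \<ge> k" using xa by simp
    qed
    have "a - 1 < m" using a1 am Suc by auto
    then obtain tl' where tl': "lcp 0 tl' = L" using less.IH[OF _ PL] by blast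
    obtain tr where tr: "lcp 0 tr = R" using less.IH[OF _ PR] a1 Suc by auto
    have "lcp 0 (Node tl' tr) = lcp 1 tl' @ R" using tr by simp
    also have "lcp 1 tl' = x # take (a - 1) xs"
      using lcp_shift[of 1 tl'] tl' L_def x1 by simp
    finally have "lcp 0 (Node tl' tr) = c" using R_def c by simp
    then show ?thesis by blast
  qed
qed


lemma expr_labels: "X j \<in> set (expr k t) \<Longrightarrow> k \<le> j \<and> j < k + leaves t"
  by (induction t arbitrary: k) fastforce+

lemma expr_ne[simp]: "expr k t \<noteq> []"
  by (cases t) auto

lemma expr_last: "last (expr k t) \<noteq> LP"
  by (cases t) auto

lemma expr_prefix: "expr k t1 @ s1 = expr k t2 @ s2 \<Longrightarrow> t1 = t2 \<and> s1 = s2"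
proof (induction t1 arbitrary: k t2 s1 s2)
  case Leaf then show ?case by (cases t2) auto
next
  case (Node l1 r1)
  then show ?case
  proof (cases t2)
    case Leaf with Node.prems show ?thesis by simp
  next
    case (Node l2 r2)
    with Node.prems have "expr k l1 @ (expr (k + leaves l1) r1 @ [RP] @ s1) = expr k l2 @ (expr (k + leaves l2) r2 @ [RP] @ s2)" by simp
    then have "l1 = l2" and "expr (k + leaves l1) r1 @ ([RP] @ s1) = expr (k + leaves l1) r2 @ ([RP] @ s2)"
      using Node.IH(1) by blast+
    then show ?thesis using Node.IH(2) Node by fastforce
  qed
qed

lemma expr_inj: "expr k t1 = expr k t2 \<Longrightarrow> t1 = t2"
  using expr_prefix[of k t1 "[]" t2 "[]"] by simp

lemma expr_decomp:
  "i < leaves t \<Longrightarrow> \<exists>a b. expr k t = a @ replicate (lcp 0 t ! i) LP @ X (k + i) # b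
     \<and> X (k + i) \<notin> set a \<and> (i = 0 \<longrightarrow> a = []) \<and> (i > 0 \<longrightarrow> a \<noteq> [] \<and> last a \<noteq> LP)"
proof (induction t arbitrary: k i)
  case Leaf then show ?case by simp
next
  case (Node l r)
  show ?case
  proof (cases "i < leaves l")
    case True
    obtain a b where ab: "expr k l = a @ replicate (lcp 0 l ! i) LP @ X (k + i) # b"
      "X (k + i) \<notin> set a" "(i = 0 \<longrightarrow> a = [])" "(i > 0 \<longrightarrow> a \<noteq> [] \<and> last a \<noteq> LP)"
      using Node.IH(1)[OF True] by blast
    have c: "lcp 0 (Node l r) ! i = lcp 0 l ! i + (if i = 0 then 1 else 0)"
      using lcp_nth[OF True, of 1] True by (simp add: nth_append)
    show ?thesis
    proof (cases "i = 0")
      case True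
      show ?thesis apply (rule exI[of _ "[]"], rule exI[of _ "b @ expr (k + leaves l) r @ [RP]"]) using True ab c by simp
    next
      case False
      show ?thesis apply (rule exI[of _ "LP # a"], rule exI[of _ "b @ expr (k + leaves l) r @ [RP]"]) using False ab c by simp
    qed
  next
    case False
    define i' where "i' = i - leaves l"
    have i': "i' < leaves r" "i = leaves l + i'" using False Node.prems i'_def by auto
    obtain a b where ab: "expr (k + leaves l) r = a @ replicate (lcp 0 r ! i') LP @ X (k + leaves l + i') # b"
      "X (k + leaves l + i') \<notin> set a" "(i' = 0 \<longrightarrow> a = [])" "(i' > 0 \<longrightarrow> a \<noteq> [] \<and> last a \<noteq> LP)"
      using Node.IH(2)[OF i'(1)] by blast
    have c: "lcp 0 (Node l r) ! i = lcp 0 r ! i'"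
      using i' by (simp add: nth_append)
    have nl: "X (k + i) \<notin> set (expr k l)" using expr_labels[of "k+i" k l] i' by auto
    have la: "last (LP # expr k l @ a) \<noteq> LP"
      using ab(3,4) expr_last[of k l] by (cases "a = []") auto
    show ?thesis
      apply (rule exI[of _ "LP # expr k l @ a"], rule exI[of _ "b @ [RP]"])
      using ab c nl la i' by (simp add: add.assoc leaves_internal)
  qed
qed

lemma lp_decomp:
  assumes "X j \<notin> set a" "a = [] \<or> last a \<noteq> LP"
  shows "lp_before (a @ replicate m LP @ X j # b) j = m"
proof -
  have "takeWhile (\<lambda>c. c \<noteq> X j) (a @ replicate m LP @ X j # b) = a @ replicate m LP"
  proof -
    have "takeWhile (\<lambda>c. c \<noteq> X j) (a @ (replicate m LP @ X j # b)) = a @ takeWhile (\<lambda>c. c \<noteq> X j) (replicate m LP @ X j # b)"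
      by (rule takeWhile_append2) (use assms(1) in auto)
    also have "takeWhile (\<lambda>c. c \<noteq> X j) (replicate m LP @ X j # b) = replicate m LP @ takeWhile (\<lambda>c. c \<noteq> X j) (X j # b)"
      by (rule takeWhile_append2) auto
    finally show ?thesis by simp
  qed
  moreover have "takeWhile (\<lambda>c. c = LP) (rev a) = []"
    using assms(2) by (cases "rev a") (auto simp: last_rev[symmetric] dest: arg_cong[of _ _ rev])
  moreover have "takeWhile (\<lambda>c. c = LP) (replicate m LP @ rev a) = replicate m LP @ takeWhile (\<lambda>c. c = LP) (rev a)"
    by (rule takeWhile_append2) auto
  ultimately show ?thesis unfolding lp_before_def by simp
qed

lemma lp_expr: "i < leaves t \<Longrightarrow> lp_before (expr k t) (k + i) = lcp 0 t ! i"
  using expr_decomp[of i t k] lp_decomp by force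


declare upt_Suc[simp del]

fun mk :: "nat \<Rightarrow> nat list \<Rightarrow> nat list" where
  "mk j [] = []"
| "mk j (x # xs) = replicate x j @ mk (Suc j) xs"

lemma count_mk: "count_list (mk j c) i = (if j \<le> i \<and> i < j + length c then c ! (i - j) else 0)"
proof (induction c arbitrary: j)
  case Nil then show ?case by simp
next
  case (Cons x xs)
  have r: "count_list (replicate x j) i = (if i = j then x else 0)"
    by (induction x) auto
  show ?case using Cons[of "Suc j"] r
    by (auto simp: nth_Cons' Suc_diff_Suc not_less_eq_eq)
qed

lemma length_mk: "length (mk j c) = sum_list c"
  by (induction c arbitrary: j) auto

lemma set_mk0: "\<forall>x\<in>set (mk j c). j \<le> x"
  by (induction c arbitrary: j) fastforce+

lemma set_mk: "set (mk j c) \<subseteq> {j..}"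
  using set_mk0[of j c] by auto

lemma bound_mk:
  "(\<forall>k<length c. c ! k > 0 \<longrightarrow> j + k \<le> d + sum_list (take k c)) \<Longrightarrow> i < length (mk j c) \<Longrightarrow> mk j c ! i \<le> i + d"
proof (induction c arbitrary: j d i)
  case Nil then show ?case by simp
next
  case (Cons x xs)
  show ?case
  proof (cases "i < x")
    case True
    then have "j \<le> d" using Cons.prems(1) by force
    then show ?thesis using True by (simp add: nth_append)
  next
    case False
    have h: "\<forall>k<length xs. xs ! k > 0 \<longrightarrow> Suc j + k \<le> (d + x) + sum_list (take k xs)"
    proof (intro allI impI)
      fix k assume "k < length xs" "xs ! k > 0"
      then show "Suc j + k \<le> (d + x) + sum_list (take k xs)"
        using Cons.prems(1) by (auto dest!: spec[of _ "Suc k"])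
    qed
    have "i - x < length (mk (Suc j) xs)" using Cons.prems(2) False by simp
    then have "mk (Suc j) xs ! (i - x) \<le> (i - x) + (d + x)" using Cons.IH[OF h] by blast
    then show ?thesis using False by (simp add: nth_append)
  qed
qed

lemma q_count: "q v j = count_list v j"
  unfolding q_def count_list_eq_length_filter length_filter_conv_card by metis

lemma sum_take_map:
  assumes "k \<le> Suc n"
  shows "sum_list (take k (map f [1..<n+2])) = sum f {1..<Suc k}"
proof -
  have "take k (map f [1..<n+2]) = map f [1..<Suc k]" using assms by (simp add: take_map take_upt)
  then show ?thesis by (metis sum_set_upt_conv_sum_list_nat set_upt)
qed

lemma Nb_P:
  assumes v: "v \<in> Nb n"
  shows "q v (Suc n) = 0 \<and> P n (map (q v) [1..<n+2])"
proof -
  have len: "length v = n" and b: "\<And>i. i < n \<Longrightarrow> 1 \<le> v ! i \<and> v ! i \<le> i + 1"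
    using v by (auto simp: Nb_def)
  have sv: "set v \<subseteq> {1..<n+2}"
  proof
    fix x assume "x \<in> set v"
    then obtain i where "i < n" "x = v ! i" using len by (auto simp: in_set_conv_nth)
    then show "x \<in> {1..<n+2}" using b[of i] by auto
  qed
  have q0: "q v (Suc n) = 0"
  proof -
    have "Suc n \<notin> set v"
    proof
      assume "Suc n \<in> set v"
      then obtain i where "i < n" "Suc n = v ! i" using len by (auto simp: in_set_conv_nth)
      then show False using b[of i] by auto
    qed
    then show ?thesis by (simp add: q_count)
  qed
  have qf: "q v = count_list v" by (rule ext) (simp add: q_count)
  have P: "P n (map (q v) [1..<n+2])"
    unfolding P_def
  proof (intro conjI allI impI)
    show "length (map (q v) [1..<n+2]) = Suc n" by simp
    have "sum_list (map (q v) [1..<n+2]) = sum (count_list v) {1..<n+2}"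
      using sum_take_map[of "Suc n" n "q v"] qf by simp
    also have "\<dots> = n" using sum_count_set[OF sv] len by simp
    finally show "sum_list (map (q v) [1..<n+2]) = n" .
    fix k assume k: "1 \<le> k \<and> k \<le> n"
    have st: "set (take k v) \<subseteq> {1..<Suc k}"
    proof
      fix x assume "x \<in> set (take k v)"
      then obtain i where "i < k" "x = v ! i" using len k by (auto simp: in_set_conv_nth)
      then show "x \<in> {1..<Suc k}" using b[of i] k by auto
    qed
    have "k = length (take k v)" using len k by simp
    also have "\<dots> = sum (count_list (take k v)) {1..<Suc k}" using sum_count_set[OF st] by simp
    also have "\<dots> \<le> sum (count_list v) {1..<Suc k}"
    proof (rule sum_mono)
      fix x
      have "count_list v x = count_list (take k v) x + count_list (drop k v) x"
        by (metis append_take_drop_id count_list_append)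
      then show "count_list (take k v) x \<le> count_list v x" by simp
    qed
    also have "\<dots> = sum_list (take k (map (q v) [1..<n+2]))"
      using sum_take_map[of k n "q v"] qf k by simp
    finally show "k \<le> sum_list (take k (map (q v) [1..<n+2]))" .
  qed
  show ?thesis using q0 P by simp
qed

lemma Y_surj:
  assumes t: "t \<in> Y n"
  shows "\<exists>v\<in>Nb n. map (q v) [1..<n+2] = lcp 0 t"
proof -
  define c where "c = lcp 0 t"
  have Pc: "P n c" using P_lcp[of t] t c_def by (simp add: Y_def)
  then have lc: "length c = Suc n" and sc: "sum_list c = n"
    and pre: "\<And>k. 1 \<le> k \<Longrightarrow> k \<le> n \<Longrightarrow> sum_list (take k c) \<ge> k" by (auto simp: P_def)
  define v where "v = mk 1 c"
  have lv: "length v = n" using v_def length_mk sc by simp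
  have h: "\<forall>k<length c. c ! k > 0 \<longrightarrow> 1 + k \<le> 1 + sum_list (take k c)"
  proof (intro allI impI)
    fix k assume "k < length c" "c ! k > 0"
    then show "1 + k \<le> 1 + sum_list (take k c)" using pre[of k] lc by (cases k) auto
  qed
  have "v \<in> Nb n"
    unfolding Nb_def
  proof (intro CollectI conjI allI impI)
    show "length v = n" by (rule lv)
    fix i assume i: "i < n"
    then have "v ! i \<in> set v" using lv by simp
    then show "1 \<le> v ! i" using set_mk[of 1 c] v_def by auto
    show "v ! i \<le> i + 1" using bound_mk[OF h, of i] i lv v_def by simp
  qed
  moreover have "map (q v) [1..<n+2] = c"
  proof (rule nth_equalityI)
    show "length (map (q v) [1..<n+2]) = length c" using lc by simp
    fix i assume "i < length (map (q v) [1..<n+2])"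
    then have "i < Suc n" by simp
    then show "map (q v) [1..<n+2] ! i = c ! i"
      using lc by (simp add: q_count v_def count_mk)
  qed
  ultimately show ?thesis using c_def by blast
qed

lemma key:
  assumes t: "t \<in> Y n" and lv: "length v = n" and q0: "q v (Suc n) = 0"
  shows "has_counts v (expr 1 t) \<longleftrightarrow> lcp 0 t = map (q v) [1..<n+2]"
proof -
  have lt: "leaves t = Suc n" using t by (simp add: Y_def leaves_internal)
  have lp: "\<And>i. i < Suc n \<Longrightarrow> lp_before (expr 1 t) (Suc i) = lcp 0 t ! i"
    using lp_expr[of _ t 1] lt by simp
  have last0: "lcp 0 t ! n = 0"
    using last_lcp[of 0 t] lt by (simp add: last_conv_nth)
  show ?thesis
  proof
    assume hc: "has_counts v (expr 1 t)"
    show "lcp 0 t = map (q v) [1..<n+2]"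
    proof (rule nth_equalityI)
      show "length (lcp 0 t) = length (map (q v) [1..<n+2])" using lt by simp
      fix i assume "i < length (lcp 0 t)"
      then have i: "i < Suc n" using lt by simp
      show "lcp 0 t ! i = map (q v) [1..<n+2] ! i"
      proof (cases "i = n")
        case True then show ?thesis using last0 q0 by (simp add: nth_append)
      next
        case False
        then have "Suc i \<in> {1..length v}" using i lv by auto
        then have "lp_before (expr 1 t) (Suc i) = q v (Suc i)" using hc by (simp add: has_counts_def)
        then show ?thesis using lp[OF i] i by (simp)
      qed
    qed
  next
    assume e: "lcp 0 t = map (q v) [1..<n+2]"
    show "has_counts v (expr 1 t)"
      unfolding has_counts_def
    proof (intro conjI ballI)
      fix j assume "j \<in> {1..length v}"
      then obtain i where i: "j = Suc i" "i < n" using lv by (cases j) auto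
      then show "lp_before (expr 1 t) j = q v j" using lp[of i] e by (simp)
    next
      show "lp_before (expr 1 t) (length v + 1) = 0" using lp[of n] last0 lv by simp
    qed
  qed
qed

lemma Tree_eq:
  assumes v: "v \<in> Nb n" and t: "t \<in> Y n" and e: "lcp 0 t = map (q v) [1..<n+2]"
  shows "Tree v = t"
proof -
  have lv: "length v = n" using v by (simp add: Nb_def)
  have q0: "q v (Suc n) = 0" using Nb_P[OF v] by simp
  have hw: "(w \<in> CE n \<and> has_counts v w) \<longleftrightarrow> w = expr 1 t" for w
  proof
    assume "w \<in> CE n \<and> has_counts v w"
    then obtain t' where t': "t' \<in> Y n" "w = expr 1 t'" "has_counts v (expr 1 t')" by (auto simp: CE_def)
    then have "lcp 0 t' = lcp 0 t" using key[OF t'(1) lv q0] e by simp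
    then show "w = expr 1 t" using lcp_inj[of t' t] t' by simp
  next
    assume "w = expr 1 t"
    then show "w \<in> CE n \<and> has_counts v w" using key[OF t lv q0] e t by (simp add: CE_def)
  qed
  have "(THE w. w \<in> CE n \<and> has_counts v w) = expr 1 t" using hw by simp
  then have "Tree v = (THE t'. t' \<in> Y n \<and> expr 1 t' = expr 1 t)" by (simp add: Tree_def lv)
  also have "\<dots> = t" using t expr_inj by blast
  finally show ?thesis .
qed

theorem proposition1:
  fixes n :: nat
  assumes "n \<ge> 1"
  shows "(\<forall>v\<in>Nb n. \<exists>!w. w \<in> CE n \<and> has_counts v w) \<and> Tree ` Nb n = Y n"
proof -
  have ex: "\<exists>t\<in>Y n. lcp 0 t = map (q v) [1..<n+2]" if v: "v \<in> Nb n" for v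
  proof -
    have "P n (map (q v) [1..<n+2])" using Nb_P[OF v] by simp
    moreover obtain t where "lcp 0 t = map (q v) [1..<n+2]" using P_exists calculation by blast
    ultimately show ?thesis using P_lcp[of t] by (auto simp: Y_def P_def)
  qed
  have A: "\<exists>!w. w \<in> CE n \<and> has_counts v w" if v: "v \<in> Nb n" for v
  proof -
    have lv: "length v = n" using v by (simp add: Nb_def)
    have q0: "q v (Suc n) = 0" using Nb_P[OF v] by simp
    obtain t where t: "t \<in> Y n" "lcp 0 t = map (q v) [1..<n+2]" using ex[OF v] by blast
    show ?thesis
    proof (rule ex1I[of _ "expr 1 t"])
      show "expr 1 t \<in> CE n \<and> has_counts v (expr 1 t)" using key[OF t(1) lv q0] t by (simp add: CE_def)
      fix w assume "w \<in> CE n \<and> has_counts v w"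
      then obtain t' where t': "t' \<in> Y n" "w = expr 1 t'" "has_counts v (expr 1 t')" by (auto simp: CE_def)
      then have "lcp 0 t' = lcp 0 t" using key[OF t'(1) lv q0] t by simp
      then show "w = expr 1 t" using lcp_inj[of t' t] t' by simp
    qed
  qed
  have B: "Tree ` Nb n = Y n"
  proof
    show "Tree ` Nb n \<subseteq> Y n"
    proof
      fix x assume "x \<in> Tree ` Nb n"
      then obtain v where v: "v \<in> Nb n" "x = Tree v" by blast
      obtain t where "t \<in> Y n" "lcp 0 t = map (q v) [1..<n+2]" using ex[OF v(1)] by blast
      then show "x \<in> Y n" using Tree_eq[OF v(1)] v by simp
    qed
    show "Y n \<subseteq> Tree ` Nb n"
    proof
      fix t assume t: "t \<in> Y n"
      then obtain v where "v \<in> Nb n" "map (q v) [1..<n+2] = lcp 0 t" using Y_surj by blast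
      then show "t \<in> Tree ` Nb n" using Tree_eq[of v n t] t by force
    qed
  qed
  show ?thesis using A B by blast
qed

end
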